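(* Let $X=X(\Sigma)$ be an $n$-dimensional complete simplicial toric variety with homogeneous coordinate ring $S=\mathbb C[x_1,\dots,x_r]$, and let $z_0,\dots,z_n$ be monomials with $z_0\cdots z_n=x_1\cdots x_r$. Let $Z_i\subset X$ be the zero locus of $z_i$. Then $Z_1\cap\dots\cap Z_n$ is a finite set, consisting of the torus-fixed points $O_\sigma$ for the maximal cones $\sigma$ of $\Sigma$ that contain a ray $\rho_j$ with $x_j\mid z_i$ for each $i=1,\dots,n$.
   Context: $\Sigma$ is a complete simplicial fan in $N_\mathbb R$ with rays $\rho_1,\dots,\rho_r$; the variable $x_j$ corresponds to $\rho_j$ and its zero locus on $X$ is the torus-invariant prime divisor $D_j$. $O_\sigma$ denotes the torus orbit corresponding to a cone $\sigma$ (a fixed point when $\sigma$ is maximal). Since $z_0\cdots z_n=x_1\cdots x_r$, each variable divides exactly one $z_i$. *)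

theory Defs
  imports "HOL-Analysis.Analysis"
begin

text \<open>Lattice N = Z^n is modelled as int^'n, its real span as real^'n.
 Rays rho_1..rho_r have primitive generators u 1, ..., u r.
 A simplicial fan is given by its cones, each cone being the set of indices of its rays.\<close>

definition rvec :: "int^'n \<Rightarrow> real^'n" where
  "rvec v = (\<chi> i. real_of_int (v$i))"

definition cone_gen :: "(nat \<Rightarrow> int^'n) \<Rightarrow> nat set \<Rightarrow> (real^'n) set" where
  "cone_gen u \<sigma> = {v. \<exists>c. (\<forall>j\<in>\<sigma>. c j \<ge> 0) \<and> v = (\<Sum>j\<in>\<sigma>. c j *\<^sub>R rvec (u j))}"

definition primitive :: "int^'n \<Rightarrow> bool" where
  "primitive v \<longleftrightarrow> (\<forall>(k::int) w. v = k *s w \<longrightarrow> \<bar>k\<bar> = 1)"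

definition complete_simplicial_fan :: "nat \<Rightarrow> (nat \<Rightarrow> int^'n) \<Rightarrow> nat set set \<Rightarrow> bool" where
  "complete_simplicial_fan r u \<Sigma> \<longleftrightarrow>
     (\<forall>j\<in>{1..r}. primitive (u j)) \<and> inj_on u {1..r} \<and>
     (\<forall>j\<in>{1..r}. {j} \<in> \<Sigma>) \<and>
     (\<forall>\<sigma>\<in>\<Sigma>. \<sigma> \<subseteq> {1..r} \<and> independent (rvec ` u ` \<sigma>)) \<and>
     (\<forall>\<sigma>\<in>\<Sigma>. \<forall>\<tau>. \<tau> \<subseteq> \<sigma> \<longrightarrow> \<tau> \<in> \<Sigma>) \<and>
     (\<forall>\<sigma>\<in>\<Sigma>. \<forall>\<tau>\<in>\<Sigma>. cone_gen u \<sigma> \<inter> cone_gen u \<tau> = cone_gen u (\<sigma> \<inter> \<tau>)) \<and>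
     (\<Union>\<sigma>\<in>\<Sigma>. cone_gen u \<sigma>) = UNIV"

definition maximal_cone :: "nat set set \<Rightarrow> nat set \<Rightarrow> bool" where
  "maximal_cone \<Sigma> \<sigma> \<longleftrightarrow> \<sigma> \<in> \<Sigma> \<and> (\<forall>\<tau>\<in>\<Sigma>. \<sigma> \<subseteq> \<tau> \<longrightarrow> \<tau> = \<sigma>)"

text \<open>Cox construction: X = (C^r - Z(Sigma)) / G.\<close>

definition dotp :: "int^'n \<Rightarrow> int^'n \<Rightarrow> int" where
  "dotp m v = (\<Sum>i\<in>UNIV. m$i * v$i)"

definition cox_group :: "nat \<Rightarrow> (nat \<Rightarrow> int^'n) \<Rightarrow> (nat \<Rightarrow> complex) set" where
  "cox_group r u = {t. (\<forall>j\<in>{1..r}. t j \<noteq> 0) \<and> (\<forall>j. j \<notin> {1..r} \<longrightarrow> t j = 1) \<and>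
      (\<forall>m::int^'n. (\<Prod>j\<in>{1..r}. t j powi dotp m (u j)) = 1)}"

definition cox_open :: "nat \<Rightarrow> nat set set \<Rightarrow> (nat \<Rightarrow> complex) set" where
  "cox_open r \<Sigma> = {x. (\<forall>j. j \<notin> {1..r} \<longrightarrow> x j = 0) \<and> (\<exists>\<sigma>\<in>\<Sigma>. \<forall>j\<in>{1..r} - \<sigma>. x j \<noteq> 0)}"

definition cox_rel :: "nat \<Rightarrow> (nat \<Rightarrow> int^'n) \<Rightarrow> ((nat \<Rightarrow> complex) \<times> (nat \<Rightarrow> complex)) set" where
  "cox_rel r u = {(x, y). \<exists>t\<in>cox_group r u. y = (\<lambda>j. t j * x j)}"

definition toric_variety :: "nat \<Rightarrow> (nat \<Rightarrow> int^'n) \<Rightarrow> nat set set \<Rightarrow> (nat \<Rightarrow> complex) set set" where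
  "toric_variety r u \<Sigma> = cox_open r \<Sigma> // cox_rel r u"

text \<open>Monomial x_1^(a 1) ... x_r^(a r), given by its exponent vector.\<close>
definition monomial_eval :: "nat \<Rightarrow> (nat \<Rightarrow> nat) \<Rightarrow> (nat \<Rightarrow> complex) \<Rightarrow> complex" where
  "monomial_eval r a x = (\<Prod>j\<in>{1..r}. x j ^ a j)"

definition zero_locus :: "nat \<Rightarrow> (nat \<Rightarrow> int^'n) \<Rightarrow> nat set set \<Rightarrow> (nat \<Rightarrow> nat) \<Rightarrow> (nat \<Rightarrow> complex) set set" where
  "zero_locus r u \<Sigma> a = {p \<in> toric_variety r u \<Sigma>. \<exists>x\<in>p. monomial_eval r a x = 0}"

definition torus_orbit :: "nat \<Rightarrow> (nat \<Rightarrow> int^'n) \<Rightarrow> nat set set \<Rightarrow> nat set \<Rightarrow> (nat \<Rightarrow> complex) set set" where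
  "torus_orbit r u \<Sigma> \<sigma> = {p \<in> toric_variety r u \<Sigma>. \<exists>x\<in>p. \<forall>j\<in>{1..r}. x j = 0 \<longleftrightarrow> j \<in> \<sigma>}"

end

theory Submission
  imports Defs
begin


lemma rvec_inj: "rvec v = rvec w \<Longrightarrow> v = w"
  by (simp add: rvec_def vec_eq_iff)

lemma cox_group_one: "(\<lambda>j. 1) \<in> cox_group r u"
  by (simp add: cox_group_def)

lemma cox_equiv: "equiv UNIV (cox_rel r u)"
proof (rule equivI)
  show "refl (cox_rel r u)"
    unfolding refl_on_def cox_rel_def using cox_group_one by fastforce
  show "sym (cox_rel r u)"
  proof (rule symI)
    fix x y assume "(x, y) \<in> cox_rel r u"
    then obtain t where t: "t \<in> cox_group r u" and y: "y = (\<lambda>j. t j * x j)"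
      unfolding cox_rel_def by auto
    let ?s = "\<lambda>j. inverse (t j)"
    have "?s \<in> cox_group r u"
    proof -
      have "(\<Prod>j\<in>{1..r}. ?s j powi dotp m (u j)) = 1" for m :: "int^'a"
      proof -
        have "(\<Prod>j\<in>{1..r}. ?s j powi dotp m (u j)) = (\<Prod>j\<in>{1..r}. inverse (t j powi dotp m (u j)))"
          by (simp add: power_int_inverse)
        also have "\<dots> = inverse (\<Prod>j\<in>{1..r}. t j powi dotp m (u j))"
          using prod_inversef[of "\<lambda>j. t j powi dotp m (u j)" "{1..r}"] by (simp add: comp_def)
        also have "\<dots> = 1" using t by (simp add: cox_group_def)
        finally show ?thesis .
      qed
      then show ?thesis using t by (auto simp: cox_group_def)
    qed
    moreover have "x = (\<lambda>j. ?s j * y j)"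
    proof
      fix j show "x j = ?s j * y j"
        using t y by (cases "j \<in> {1..r}") (auto simp: cox_group_def)
    qed
    ultimately show "(y, x) \<in> cox_rel r u" unfolding cox_rel_def by auto
  qed
  show "trans (cox_rel r u)"
  proof (rule transI)
    fix x y w assume "(x, y) \<in> cox_rel r u" "(y, w) \<in> cox_rel r u"
    then obtain t s where t: "t \<in> cox_group r u" and y: "y = (\<lambda>j. t j * x j)"
      and s: "s \<in> cox_group r u" and w: "w = (\<lambda>j. s j * y j)"
      unfolding cox_rel_def by auto
    have "(\<lambda>j. s j * t j) \<in> cox_group r u"
      using s t by (auto simp: cox_group_def power_int_mult_distrib prod.distrib)
    moreover have "w = (\<lambda>j. (s j * t j) * x j)" using y w by (simp add: mult.assoc)
    ultimately show "(x, w) \<in> cox_rel r u" unfolding cox_rel_def by auto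
  qed
qed simp

lemma cox_rel_zero: "(y, x) \<in> cox_rel r u \<Longrightarrow> j \<in> {1..r} \<Longrightarrow> x j = 0 \<longleftrightarrow> y j = 0"
  by (auto simp: cox_rel_def cox_group_def)

lemma cox_rel_out: "(y, x) \<in> cox_rel r u \<Longrightarrow> j \<notin> {1..r} \<Longrightarrow> x j = y j"
  by (auto simp: cox_rel_def cox_group_def)

lemma monomial_eval_zero:
  "monomial_eval r a x = 0 \<longleftrightarrow> (\<exists>j\<in>{1..r}. a j \<noteq> 0 \<and> x j = 0)"
  by (auto simp: monomial_eval_def)

lemma fan_basic:
  assumes fan: "complete_simplicial_fan r u \<Sigma>" and s: "\<sigma> \<in> \<Sigma>"
  shows "\<sigma> \<subseteq> {1..r}" "finite \<sigma>" "inj_on (\<lambda>j. rvec (u j)) \<sigma>"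
    "independent ((\<lambda>j. rvec (u j)) ` \<sigma>)"
proof -
  show a: "\<sigma> \<subseteq> {1..r}" using fan s by (auto simp: complete_simplicial_fan_def)
  then show "finite \<sigma>" using finite_subset by blast
  show "inj_on (\<lambda>j. rvec (u j)) \<sigma>"
    using fan a unfolding complete_simplicial_fan_def inj_on_def by (meson rvec_inj subsetD)
  have "rvec ` u ` \<sigma> = (\<lambda>j. rvec (u j)) ` \<sigma>" by auto
  then show "independent ((\<lambda>j. rvec (u j)) ` \<sigma>)"
    using fan s by (auto simp: complete_simplicial_fan_def)
qed

lemma fan_coeff_zero:
  assumes fan: "complete_simplicial_fan r u \<Sigma>" and s: "\<sigma> \<in> \<Sigma>"
    and eq: "(\<Sum>j\<in>\<sigma>. c j *\<^sub>R rvec (u j)) = 0" and j: "j \<in> \<sigma>"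
  shows "c j = 0"
proof (rule ccontr)
  assume nz: "c j \<noteq> 0"
  let ?U = "\<lambda>j. rvec (u j)"
  note b = fan_basic[OF fan s]
  let ?g = "\<lambda>v. c (inv_into \<sigma> ?U v)"
  have "(\<Sum>v\<in>?U ` \<sigma>. ?g v *\<^sub>R v) = (\<Sum>j\<in>\<sigma>. ?g (?U j) *\<^sub>R ?U j)"
    by (rule sum.reindex[OF b(3), unfolded comp_def])
  also have "\<dots> = (\<Sum>j\<in>\<sigma>. c j *\<^sub>R ?U j)"
    by (rule sum.cong) (auto simp: inv_into_f_f[OF b(3)])
  finally have "(\<Sum>v\<in>?U ` \<sigma>. ?g v *\<^sub>R v) = 0" using eq by simp
  moreover have "?g (?U j) \<noteq> 0" using nz j by (simp add: inv_into_f_f[OF b(3)])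
  ultimately have "dependent (?U ` \<sigma>)"
    using b(2) j by (subst dependent_finite) auto
  then show False using b(4) by simp
qed

lemma fan_coeff_unique:
  assumes fan: "complete_simplicial_fan r u \<Sigma>" and s: "\<sigma> \<in> \<Sigma>"
    and eq: "(\<Sum>j\<in>\<sigma>. c j *\<^sub>R rvec (u j)) = (\<Sum>j\<in>\<sigma>. d j *\<^sub>R rvec (u j))" and j: "j \<in> \<sigma>"
  shows "c j = d j"
proof -
  have "(\<Sum>j\<in>\<sigma>. (c j - d j) *\<^sub>R rvec (u j)) = 0"
    using eq by (simp add: scaleR_diff_left sum_subtractf)
  from fan_coeff_zero[OF fan s this j] show ?thesis by simp
qed

lemma fan_card_le:
  fixes u :: "nat \<Rightarrow> int^'n::finite"
  assumes fan: "complete_simplicial_fan r u \<Sigma>" and s: "\<sigma> \<in> \<Sigma>"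
  shows "card \<sigma> \<le> CARD('n)"
proof -
  note b = fan_basic[OF fan s]
  have "card ((\<lambda>j. rvec (u j)) ` \<sigma>) = card \<sigma>" using card_image[OF b(3)] .
  moreover have "card ((\<lambda>j. rvec (u j)) ` \<sigma>) \<le> DIM(real^'n)"
    using independent_card_le[OF b(4)] .
  ultimately show ?thesis by (simp add: DIM_cart)
qed

lemma fan_span:
  fixes u :: "nat \<Rightarrow> int^'n::finite"
  assumes fan: "complete_simplicial_fan r u \<Sigma>" and s: "\<sigma> \<in> \<Sigma>"
    and c: "card \<sigma> = CARD('n)"
  shows "\<exists>c. v = (\<Sum>j\<in>\<sigma>. c j *\<^sub>R rvec (u j))"
proof -
  let ?U = "\<lambda>j. rvec (u j)"
  note b = fan_basic[OF fan s]
  have "dim (UNIV :: (real^'n) set) \<le> card (?U ` \<sigma>)"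
    using card_image[OF b(3)] c by (simp add: dim_UNIV DIM_cart)
  then have "(UNIV :: (real^'n) set) \<subseteq> span (?U ` \<sigma>)"
    using card_ge_dim_independent[OF _ b(4)] by blast
  then have "v \<in> span (?U ` \<sigma>)" by blast
  then obtain g where g: "v = (\<Sum>w\<in>?U ` \<sigma>. g w *\<^sub>R w)"
    using span_finite[of "?U ` \<sigma>"] b(2) by auto
  also have "\<dots> = (\<Sum>j\<in>\<sigma>. g (?U j) *\<^sub>R ?U j)"
    by (rule sum.reindex[OF b(3), unfolded comp_def])
  finally show ?thesis by (intro exI[of _ "\<lambda>j. g (?U j)"])
qed



lemma fan_max_card:
  fixes u :: "nat \<Rightarrow> int^'n::finite"
  assumes fan: "complete_simplicial_fan r u \<Sigma>" and m: "maximal_cone \<Sigma> \<sigma>"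
  shows "card \<sigma> = CARD('n)"
proof (rule ccontr)
  assume ne: "card \<sigma> \<noteq> CARD('n)"
  let ?U = "\<lambda>j. rvec (u j)"
  have s: "\<sigma> \<in> \<Sigma>" using m by (simp add: maximal_cone_def)
  note b = fan_basic[OF fan s]
  have lt: "card \<sigma> < CARD('n)" using ne fan_card_le[OF fan s] by simp
  have "span (?U ` \<sigma>) \<noteq> UNIV"
  proof
    assume "span (?U ` \<sigma>) = UNIV"
    then have "dim (span (?U ` \<sigma>)) = CARD('n)" by (simp add: dim_UNIV DIM_cart)
    moreover have "dim (span (?U ` \<sigma>)) = card \<sigma>"
      using dim_span dim_eq_card_independent[OF b(4)] card_image[OF b(3)] by simp
    ultimately show False using lt by simp
  qed
  then obtain w where w: "w \<notin> span (?U ` \<sigma>)" by blast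
  define v where "v = (\<Sum>j\<in>\<sigma>. 1 *\<^sub>R ?U j)"
  define p where "p = (\<lambda>k::nat. v + (1 / real k) *\<^sub>R w)"
  have finS: "finite \<Sigma>"
  proof -
    have "\<Sigma> \<subseteq> Pow {1..r}" using fan by (auto simp: complete_simplicial_fan_def)
    then show ?thesis using finite_subset by blast
  qed
  have infA: "infinite {k::nat. 0 < k}"
    by (simp add: infinite_nat_iff_unbounded) (meson less_Suc_eq zero_less_Suc)
  have "\<forall>k\<in>{k::nat. 0 < k}. \<exists>\<tau>\<in>\<Sigma>. p k \<in> cone_gen u \<tau>"
  proof
    fix k :: nat
    have "p k \<in> (\<Union>\<sigma>\<in>\<Sigma>. cone_gen u \<sigma>)" using fan by (simp add: complete_simplicial_fan_def)
    then show "\<exists>\<tau>\<in>\<Sigma>. p k \<in> cone_gen u \<tau>" by blast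
  qed
  from pigeonhole_infinite_rel[OF infA finS this]
  obtain \<tau> where tS: "\<tau> \<in> \<Sigma>" and infK: "infinite {k \<in> {k::nat. 0 < k}. p k \<in> cone_gen u \<tau>}"
    by blast
  define K where "K = {k \<in> {k::nat. 0 < k}. p k \<in> cone_gen u \<tau>}"
  have infK': "infinite K" using infK K_def by simp
  have coef: "\<exists>c. (\<forall>j\<in>\<tau>. c j \<ge> 0) \<and> p k = (\<Sum>j\<in>\<tau>. c j *\<^sub>R ?U j)" if "k \<in> K" for k
    using that unfolding K_def cone_gen_def by auto
  have "K \<noteq> {}" using infK' by (metis finite.emptyI)
  then obtain k1 where k1: "k1 \<in> K" by blast
  have "infinite (K - {k1})" using infK' by simp
  then have "K - {k1} \<noteq> {}" by (metis finite.emptyI)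
  then obtain k2 where k2: "k2 \<in> K - {k1}" by blast
  obtain c1 where c1: "p k1 = (\<Sum>j\<in>\<tau>. c1 j *\<^sub>R ?U j)" using coef[OF k1] by blast
  obtain c2 where c2: "p k2 = (\<Sum>j\<in>\<tau>. c2 j *\<^sub>R ?U j)" using coef k2 by blast
  have k1p: "k1 > 0" and k2p: "k2 > 0" and k12: "k1 \<noteq> k2" using k1 k2 K_def by auto
  define \<delta> where "\<delta> = 1 / real k1 - 1 / real k2"
  have dnz: "\<delta> \<noteq> 0" using k12 k1p k2p by (simp add: \<delta>_def field_simps)
  define bb where "bb = (\<lambda>j. (c1 j - c2 j) / \<delta>)"
  define aa where "aa = (\<lambda>j. c1 j - bb j / real k1)"
  have "(\<Sum>j\<in>\<tau>. (c1 j - c2 j) *\<^sub>R ?U j) = p k1 - p k2"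
    using c1 c2 by (simp add: scaleR_diff_left sum_subtractf)
  also have "\<dots> = \<delta> *\<^sub>R w" by (simp add: p_def \<delta>_def scaleR_diff_left)
  finally have e1: "(\<Sum>j\<in>\<tau>. (c1 j - c2 j) *\<^sub>R ?U j) = \<delta> *\<^sub>R w" .
  have bw: "(\<Sum>j\<in>\<tau>. bb j *\<^sub>R ?U j) = w"
  proof -
    have "(\<Sum>j\<in>\<tau>. bb j *\<^sub>R ?U j) = (1/\<delta>) *\<^sub>R (\<Sum>j\<in>\<tau>. (c1 j - c2 j) *\<^sub>R ?U j)"
      by (simp add: bb_def scaleR_sum_right divide_inverse mult.commute)
    also have "\<dots> = w" using e1 dnz by simp
    finally show ?thesis .
  qed
  have av: "(\<Sum>j\<in>\<tau>. aa j *\<^sub>R ?U j) = v"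
  proof -
    have "(\<Sum>j\<in>\<tau>. aa j *\<^sub>R ?U j) = (\<Sum>j\<in>\<tau>. c1 j *\<^sub>R ?U j) - (1 / real k1) *\<^sub>R (\<Sum>j\<in>\<tau>. bb j *\<^sub>R ?U j)"
      by (simp add: aa_def scaleR_diff_left sum_subtractf scaleR_sum_right divide_inverse mult.commute)
    also have "\<dots> = v" using c1 bw by (simp add: p_def) (metis add_diff_cancel_right')
    finally show ?thesis .
  qed
  have pos: "aa j + bb j / real k \<ge> 0" if kK: "k \<in> K" and jt: "j \<in> \<tau>" for k j
  proof -
    obtain c where c: "\<forall>j\<in>\<tau>. c j \<ge> 0" "p k = (\<Sum>j\<in>\<tau>. c j *\<^sub>R ?U j)" using coef[OF kK] by blast
    have h: "(\<Sum>j\<in>\<tau>. (bb j / real k) *\<^sub>R ?U j) = (1 / real k) *\<^sub>R (\<Sum>j\<in>\<tau>. bb j *\<^sub>R ?U j)"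
      unfolding scaleR_sum_right scaleR_scaleR by (simp add: mult.commute)
    have "(\<Sum>j\<in>\<tau>. (aa j + bb j / real k) *\<^sub>R ?U j) = (\<Sum>j\<in>\<tau>. aa j *\<^sub>R ?U j) + (\<Sum>j\<in>\<tau>. (bb j / real k) *\<^sub>R ?U j)"
      by (simp add: scaleR_add_left sum.distrib)
    also have "\<dots> = v + (1 / real k) *\<^sub>R w" using av bw h by simp
    finally have "(\<Sum>j\<in>\<tau>. (aa j + bb j / real k) *\<^sub>R ?U j) = v + (1 / real k) *\<^sub>R w" .
    also have "\<dots> = (\<Sum>j\<in>\<tau>. c j *\<^sub>R ?U j)" using c(2) by (simp add: p_def)
    finally have "aa j + bb j / real k = c j" using fan_coeff_unique[OF fan tS _ jt, of "\<lambda>j. aa j + bb j / real k" c] by blast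
    then show ?thesis using c(1) jt by simp
  qed
  have anneg: "aa j \<ge> 0" if j: "j \<in> \<tau>" for j
  proof (rule ccontr)
    assume "\<not> aa j \<ge> 0"
    then have an: "aa j < 0" by simp
    obtain k where k: "k \<in> K" "real k > \<bar>bb j\<bar> / (- aa j)"
    proof -
      obtain k where "k \<in> K" "nat \<lceil>\<bar>bb j\<bar> / (- aa j)\<rceil> < k"
        using infK' by (meson infinite_nat_iff_unbounded)
      moreover have "\<bar>bb j\<bar> / (- aa j) < real k"
      proof -
        have "\<bar>bb j\<bar> / (- aa j) \<le> real (nat \<lceil>\<bar>bb j\<bar> / (- aa j)\<rceil>)" by linarith
        also have "\<dots> < real k" using \<open>nat \<lceil>\<bar>bb j\<bar> / (- aa j)\<rceil> < k\<close> by linarith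
        finally show ?thesis .
      qed
      ultimately show ?thesis using that by blast
    qed
    have kp: "real k > 0" using k(1) K_def by simp
    have "\<bar>bb j\<bar> < (- aa j) * real k" using k(2) an by (simp add: field_simps)
    moreover have "aa j * real k + bb j \<ge> 0"
      using pos[OF k(1) j] kp by (simp add: field_simps)
    ultimately show False by linarith
  qed
  have "v \<in> cone_gen u \<tau>" using anneg av unfolding cone_gen_def by auto
  moreover have "v \<in> cone_gen u \<sigma>" unfolding cone_gen_def v_def by (rule CollectI, rule exI[of _ "\<lambda>_. 1"]) auto
  moreover have "cone_gen u \<sigma> \<inter> cone_gen u \<tau> = cone_gen u (\<sigma> \<inter> \<tau>)"
    using fan s tS unfolding complete_simplicial_fan_def by blast
  ultimately have "v \<in> cone_gen u (\<sigma> \<inter> \<tau>)" by blast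
  then obtain d where d: "v = (\<Sum>j\<in>\<sigma> \<inter> \<tau>. d j *\<^sub>R ?U j)" unfolding cone_gen_def by auto
  have "(\<Sum>j\<in>\<sigma>. (if j \<in> \<tau> then d j else 0) *\<^sub>R ?U j) = (\<Sum>j\<in>\<sigma> \<inter> \<tau>. d j *\<^sub>R ?U j)"
  proof -
    have "(\<Sum>j\<in>\<sigma>. (if j \<in> \<tau> then d j else 0) *\<^sub>R ?U j) = (\<Sum>j\<in>\<sigma>. if j \<in> \<tau> then d j *\<^sub>R ?U j else 0)"
      by (rule sum.cong) auto
    also have "\<dots> = (\<Sum>j\<in>\<sigma> \<inter> \<tau>. d j *\<^sub>R ?U j)"
      using sum.inter_restrict[OF b(2), of "\<lambda>j. d j *\<^sub>R ?U j" \<tau>] by simp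
    finally show ?thesis .
  qed
  then have "(\<Sum>j\<in>\<sigma>. 1 *\<^sub>R ?U j) = (\<Sum>j\<in>\<sigma>. (if j \<in> \<tau> then d j else 0) *\<^sub>R ?U j)"
    using d v_def by simp
  then have "\<sigma> \<subseteq> \<tau>"
  proof -
    assume eq: "(\<Sum>j\<in>\<sigma>. 1 *\<^sub>R ?U j) = (\<Sum>j\<in>\<sigma>. (if j \<in> \<tau> then d j else 0) *\<^sub>R ?U j)"
    show ?thesis
    proof
      fix j assume "j \<in> \<sigma>"
      from fan_coeff_unique[OF fan s eq this] show "j \<in> \<tau>" by (cases "j \<in> \<tau>") auto
    qed
  qed
  then have "\<tau> = \<sigma>" using m tS by (simp add: maximal_cone_def)
  then have "w \<in> span (?U ` \<sigma>)" using bw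
    by (metis (no_types, lifting) span_sum span_scale span_base imageI)
  then show False using w by simp
qed



lemma orbit_trans:
  fixes u :: "nat \<Rightarrow> int^'n::finite"
  assumes fan: "complete_simplicial_fan r u \<Sigma>" and s: "\<sigma> \<in> \<Sigma>" and cd: "card \<sigma> = CARD('n)"
    and xo: "\<forall>j. j \<notin> {1..r} \<longrightarrow> x j = 0" and yo: "\<forall>j. j \<notin> {1..r} \<longrightarrow> y j = 0"
    and xz: "\<forall>j\<in>{1..r}. x j = 0 \<longleftrightarrow> j \<in> \<sigma>" and yz: "\<forall>j\<in>{1..r}. y j = 0 \<longleftrightarrow> j \<in> \<sigma>"
  shows "(x, y) \<in> cox_rel r u"
proof -
  note b = fan_basic[OF fan s]
  have "\<forall>k::'n. \<exists>c. axis k (1::real) = (\<Sum>j\<in>\<sigma>. c j *\<^sub>R rvec (u j))"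
    using fan_span[OF fan s cd] by blast
  then obtain C where C: "\<And>k. axis k (1::real) = (\<Sum>j\<in>\<sigma>. C k j *\<^sub>R rvec (u j))" by metis
  have Ccomp: "(\<Sum>j\<in>\<sigma>. C k j * real_of_int (u j $ k')) = (if k' = k then 1 else 0)" for k k'
  proof -
    have "axis k (1::real) $ k' = (\<Sum>j\<in>\<sigma>. C k j *\<^sub>R rvec (u j)) $ k'" using C by simp
    then show ?thesis by (simp add: sum_component rvec_def axis_def)
  qed
  define L where "L j = Ln (y j / x j)" for j
  define \<beta> where "\<beta> k = - (\<Sum>j\<in>{1..r}-\<sigma>. of_int (u j $ k) * L j)" for k
  define \<nu> where "\<nu> j = (if j \<in> \<sigma> then (\<Sum>k\<in>UNIV. \<beta> k * of_real (C k j)) else L j)" for j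
  define t where "t j = (if j \<in> {1..r} then exp (\<nu> j) else 1)" for j
  have yt: "y = (\<lambda>j. t j * x j)"
  proof
    fix j show "y j = t j * x j"
    proof (cases "j \<in> {1..r}")
      case True
      show ?thesis
      proof (cases "j \<in> \<sigma>")
        case True
        then have "x j = 0" "y j = 0" using xz yz \<open>j \<in> {1..r}\<close> by auto
        then show ?thesis by simp
      next
        case False
        then have "x j \<noteq> 0" "y j \<noteq> 0" using xz yz \<open>j \<in> {1..r}\<close> by auto
        then show ?thesis using False \<open>j \<in> {1..r}\<close> by (simp add: t_def \<nu>_def L_def)
      qed
    next
      case False then show ?thesis using xo yo by (simp add: t_def)
    qed
  qed
  have inner: "(\<Sum>j\<in>{1..r}. of_int (u j $ k) * \<nu> j) = 0" for k
  proof -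
    have sub: "\<sigma> \<subseteq> {1..r}" using b(1) .
    have "(\<Sum>j\<in>{1..r}. of_int (u j $ k) * \<nu> j) =
        (\<Sum>j\<in>{1..r}-\<sigma>. of_int (u j $ k) * \<nu> j) + (\<Sum>j\<in>\<sigma>. of_int (u j $ k) * \<nu> j)"
      using sum.subset_diff[OF sub] by simp
    also have "(\<Sum>j\<in>{1..r}-\<sigma>. of_int (u j $ k) * \<nu> j) = - \<beta> k"
      by (simp add: \<beta>_def \<nu>_def)
    also have "(\<Sum>j\<in>\<sigma>. of_int (u j $ k) * \<nu> j) = (\<Sum>j\<in>\<sigma>. \<Sum>k'\<in>UNIV. \<beta> k' * (of_real (C k' j) * of_int (u j $ k)))"
      by (rule sum.cong) (auto simp: \<nu>_def sum_distrib_left sum_distrib_right mult_ac)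
    also have "\<dots> = (\<Sum>k'\<in>UNIV. \<beta> k' * (\<Sum>j\<in>\<sigma>. of_real (C k' j) * of_int (u j $ k)))"
      by (simp add: sum.swap[of _ \<sigma>] sum_distrib_left)
    also have "\<dots> = (\<Sum>k'\<in>UNIV. \<beta> k' * of_real (\<Sum>j\<in>\<sigma>. C k' j * real_of_int (u j $ k)))"
      by (simp add: of_real_sum)
    also have "\<dots> = (\<Sum>k'\<in>UNIV. \<beta> k' * of_real (if k = k' then 1 else 0))"
      by (simp add: Ccomp)
    also have "\<dots> = (\<Sum>k'\<in>UNIV. if k = k' then \<beta> k' else 0)"
      by (rule sum.cong) auto
    also have "\<dots> = \<beta> k" by simp
    finally show ?thesis by simp
  qed
  have tG: "t \<in> cox_group r u"
  proof -
    have "(\<Prod>j\<in>{1..r}. t j powi dotp m (u j)) = 1" for m :: "int^'n"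
    proof -
      have "(\<Prod>j\<in>{1..r}. t j powi dotp m (u j)) = (\<Prod>j\<in>{1..r}. exp (of_int (dotp m (u j)) * \<nu> j))"
        by (rule prod.cong) (auto simp: t_def exp_power_int)
      also have "\<dots> = exp (\<Sum>j\<in>{1..r}. of_int (dotp m (u j)) * \<nu> j)"
        by (simp add: exp_sum)
      also have "(\<Sum>j\<in>{1..r}. of_int (dotp m (u j)) * \<nu> j) =
          (\<Sum>j\<in>{1..r}. \<Sum>k\<in>UNIV. of_int (m $ k) * (of_int (u j $ k) * \<nu> j))"
        by (rule sum.cong) (simp_all add: dotp_def of_int_sum sum_distrib_left sum_distrib_right mult_ac)
      also have "\<dots> = (\<Sum>k\<in>UNIV. of_int (m $ k) * (\<Sum>j\<in>{1..r}. of_int (u j $ k) * \<nu> j))"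
        unfolding sum_distrib_left by (rule sum.swap)
      also have "\<dots> = 0" by (rule sum.neutral) (metis inner mult_zero_right)
      finally show ?thesis by simp
    qed
    then show ?thesis by (auto simp: cox_group_def t_def)
  qed
  show ?thesis using tG yt unfolding cox_rel_def by auto
qed



lemma supp_disj:
  fixes z :: "nat \<Rightarrow> nat \<Rightarrow> nat"
  assumes prod: "\<forall>j\<in>{1..r}. (\<Sum>i\<in>{0..N}. z i j) = 1" and j: "j \<in> {1..r}"
    and i: "i \<in> {0..N}" and i': "i' \<in> {0..N}" and nz: "z i j \<noteq> 0" "z i' j \<noteq> 0"
  shows "i = i'"
proof (rule ccontr)
  assume ne: "i \<noteq> i'"
  have "(\<Sum>k\<in>{i, i'}. z k j) \<le> (\<Sum>k\<in>{0..N}. z k j)"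
    using i i' by (intro sum_mono2) auto
  moreover have "(\<Sum>k\<in>{i, i'}. z k j) = z i j + z i' j" using ne by simp
  ultimately show False using prod j nz by fastforce
qed

theorem mainTheorem10:
  fixes u :: "nat \<Rightarrow> int^'n" and \<Sigma> :: "nat set set" and r :: nat
    and z :: "nat \<Rightarrow> nat \<Rightarrow> nat"
  assumes fan: "complete_simplicial_fan r u \<Sigma>"
    and mono: "\<forall>i\<in>{0..CARD('n)}. \<forall>j. j \<notin> {1..r} \<longrightarrow> z i j = 0"
    and prod: "\<forall>j\<in>{1..r}. (\<Sum>i\<in>{0..CARD('n)}. z i j) = 1"
  shows "finite (\<Inter>i\<in>{1..CARD('n)}. zero_locus r u \<Sigma> (z i))
    \<and> (\<Inter>i\<in>{1..CARD('n)}. zero_locus r u \<Sigma> (z i)) =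
        (\<Union>\<sigma>\<in>{\<sigma>. maximal_cone \<Sigma> \<sigma> \<and> (\<forall>i\<in>{1..CARD('n)}. \<exists>j\<in>\<sigma>. z i j \<noteq> 0)}.
            torus_orbit r u \<Sigma> \<sigma>)
    \<and> (\<forall>\<sigma>. maximal_cone \<Sigma> \<sigma> \<longrightarrow> (\<exists>p. torus_orbit r u \<Sigma> \<sigma> = {p}))"
proof -
  let ?N = "CARD('n)"
  let ?R = "cox_rel r u"
  note eqv = cox_equiv[of r u]
  define I where "I = (\<Inter>i\<in>{1..?N}. zero_locus r u \<Sigma> (z i))"
  define M where "M = {\<sigma>. maximal_cone \<Sigma> \<sigma> \<and> (\<forall>i\<in>{1..?N}. \<exists>j\<in>\<sigma>. z i j \<noteq> 0)}"
  have single: "\<exists>p. torus_orbit r u \<Sigma> \<sigma> = {p}" if m: "maximal_cone \<Sigma> \<sigma>" for \<sigma>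
  proof -
    have s: "\<sigma> \<in> \<Sigma>" using m by (simp add: maximal_cone_def)
    have cd: "card \<sigma> = ?N" using fan_max_card[OF fan m] .
    note b = fan_basic[OF fan s]
    define x0 where "x0 j = (if j \<in> {1..r} - \<sigma> then 1 else (0::complex))" for j
    have x0o: "x0 \<in> cox_open r \<Sigma>"
      unfolding cox_open_def x0_def using s by auto
    have x0z: "\<forall>j\<in>{1..r}. x0 j = 0 \<longleftrightarrow> j \<in> \<sigma>" by (simp add: x0_def)
    define p0 where "p0 = ?R `` {x0}"
    have p0T: "p0 \<in> toric_variety r u \<Sigma>"
      unfolding p0_def toric_variety_def using x0o by (rule quotientI)
    have x0p: "x0 \<in> p0" unfolding p0_def using equiv_class_self[OF eqv] by simp
    have "torus_orbit r u \<Sigma> \<sigma> = {p0}"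
    proof
      show "{p0} \<subseteq> torus_orbit r u \<Sigma> \<sigma>"
        using p0T x0p x0z unfolding torus_orbit_def by blast
    next
      show "torus_orbit r u \<Sigma> \<sigma> \<subseteq> {p0}"
      proof
        fix p assume "p \<in> torus_orbit r u \<Sigma> \<sigma>"
        then obtain x where pT: "p \<in> toric_variety r u \<Sigma>" and xp: "x \<in> p"
          and xz: "\<forall>j\<in>{1..r}. x j = 0 \<longleftrightarrow> j \<in> \<sigma>"
          unfolding torus_orbit_def by blast
        from pT obtain y where py: "p = ?R `` {y}" and yo: "y \<in> cox_open r \<Sigma>"
          unfolding toric_variety_def by (rule quotientE)
        have yx: "(y, x) \<in> ?R" using xp py by simp
        have xo: "\<forall>j. j \<notin> {1..r} \<longrightarrow> x j = 0"
          using cox_rel_out[OF yx] yo by (simp add: cox_open_def)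
        have x0o': "\<forall>j. j \<notin> {1..r} \<longrightarrow> x0 j = 0" by (simp add: x0_def)
        have "(x, x0) \<in> ?R" using orbit_trans[OF fan s cd xo x0o' xz x0z] .
        then have "p = p0" unfolding py p0_def
          using equiv_class_eq[OF eqv yx] equiv_class_eq[OF eqv] by simp
        then show "p \<in> {p0}" by simp
      qed
    qed
    then show ?thesis by blast
  qed
  have Npos: "1 \<le> ?N" by (simp add: Suc_leI)
  have eq: "I = (\<Union>\<sigma>\<in>M. torus_orbit r u \<Sigma> \<sigma>)"
  proof
    show "I \<subseteq> (\<Union>\<sigma>\<in>M. torus_orbit r u \<Sigma> \<sigma>)"
    proof
      fix p assume pI: "p \<in> I"
      have "p \<in> zero_locus r u \<Sigma> (z 1)" using pI Npos unfolding I_def by auto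
      then have pT: "p \<in> toric_variety r u \<Sigma>" unfolding zero_locus_def by simp
      from pT obtain y where py: "p = ?R `` {y}" and yo: "y \<in> cox_open r \<Sigma>"
        unfolding toric_variety_def by (rule quotientE)
      have hz: "\<exists>j\<in>{1..r}. z i j \<noteq> 0 \<and> y j = 0" if i: "i \<in> {1..?N}" for i
      proof -
        have "p \<in> zero_locus r u \<Sigma> (z i)" using pI i unfolding I_def by auto
        then obtain x where xp: "x \<in> p" and mz: "monomial_eval r (z i) x = 0"
          unfolding zero_locus_def by blast
        have yx: "(y, x) \<in> ?R" using xp py by simp
        from mz obtain j where "j \<in> {1..r}" "z i j \<noteq> 0" "x j = 0"
          unfolding monomial_eval_zero by blast
        then show ?thesis using cox_rel_zero[OF yx] by blast
      qed
      define Zy where "Zy = {j \<in> {1..r}. y j = 0}"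
      from yo obtain \<sigma>0 where s0: "\<sigma>0 \<in> \<Sigma>" and s0y: "\<forall>j\<in>{1..r} - \<sigma>0. y j \<noteq> 0"
        unfolding cox_open_def by blast
      have "Zy \<subseteq> \<sigma>0" using s0y unfolding Zy_def by blast
      then have ZS: "Zy \<in> \<Sigma>" using fan s0 unfolding complete_simplicial_fan_def by blast
      have finZ: "finite Zy" unfolding Zy_def by simp
      obtain f where f: "\<And>i. i \<in> {1..?N} \<Longrightarrow> f i \<in> {1..r} \<and> z i (f i) \<noteq> 0 \<and> y (f i) = 0"
        using hz by metis
      have inj: "inj_on f {1..?N}"
      proof (rule inj_onI)
        fix i i' assume ii: "i \<in> {1..?N}" "i' \<in> {1..?N}" "f i = f i'"
        have a: "f i \<in> {1..r}" "z i (f i) \<noteq> 0" using f[OF ii(1)] by auto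
        have c: "z i' (f i) \<noteq> 0" using f[OF ii(2)] ii(3) by auto
        show "i = i'" using supp_disj[OF prod a(1) _ _ a(2) c] ii(1,2) by auto
      qed
      have "f ` {1..?N} \<subseteq> Zy" using f unfolding Zy_def by auto
      then have "card (f ` {1..?N}) \<le> card Zy" using finZ by (rule card_mono[rotated])
      then have ge: "?N \<le> card Zy" using card_image[OF inj] by simp
      have cZ: "card Zy = ?N" using ge fan_card_le[OF fan ZS] by simp
      have mZ: "maximal_cone \<Sigma> Zy"
        unfolding maximal_cone_def
      proof (intro conjI ballI impI)
        show "Zy \<in> \<Sigma>" by (rule ZS)
        fix \<tau> assume tS: "\<tau> \<in> \<Sigma>" and sub: "Zy \<subseteq> \<tau>"
        have "finite \<tau>" using fan_basic(2)[OF fan tS] .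
        moreover have "card \<tau> \<le> card Zy" using fan_card_le[OF fan tS] cZ by simp
        ultimately show "\<tau> = Zy" using card_seteq[OF _ sub] by simp
      qed
      have ZM: "Zy \<in> M"
        unfolding M_def using mZ f unfolding Zy_def by blast
      have "y \<in> p" using py equiv_class_self[OF eqv] by simp
      then have "p \<in> torus_orbit r u \<Sigma> Zy"
        unfolding torus_orbit_def using pT Zy_def by auto
      then show "p \<in> (\<Union>\<sigma>\<in>M. torus_orbit r u \<Sigma> \<sigma>)" using ZM by blast
    qed
  next
    show "(\<Union>\<sigma>\<in>M. torus_orbit r u \<Sigma> \<sigma>) \<subseteq> I"
    proof
      fix p assume "p \<in> (\<Union>\<sigma>\<in>M. torus_orbit r u \<Sigma> \<sigma>)"
      then obtain \<sigma> where sM: "\<sigma> \<in> M" and po: "p \<in> torus_orbit r u \<Sigma> \<sigma>" by blast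
      have s: "\<sigma> \<in> \<Sigma>" using sM by (simp add: M_def maximal_cone_def)
      have sub: "\<sigma> \<subseteq> {1..r}" using fan_basic(1)[OF fan s] .
      from po obtain x where pT: "p \<in> toric_variety r u \<Sigma>" and xp: "x \<in> p"
          and xz: "\<forall>j\<in>{1..r}. x j = 0 \<longleftrightarrow> j \<in> \<sigma>"
        unfolding torus_orbit_def by blast
      have "p \<in> zero_locus r u \<Sigma> (z i)" if i: "i \<in> {1..?N}" for i
      proof -
        obtain j where j: "j \<in> \<sigma>" "z i j \<noteq> 0" using sM i unfolding M_def by blast
        then have "monomial_eval r (z i) x = 0"
          unfolding monomial_eval_zero using sub xz by blast
        then show ?thesis unfolding zero_locus_def using pT xp by blast
      qed
      then show "p \<in> I" unfolding I_def by blast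
    qed
  qed
  have finM: "finite M"
  proof -
    have "M \<subseteq> Pow {1..r}"
    proof
      fix \<sigma> assume "\<sigma> \<in> M"
      then have "\<sigma> \<in> \<Sigma>" unfolding M_def maximal_cone_def by blast
      then show "\<sigma> \<in> Pow {1..r}" using fan_basic(1)[OF fan] by blast
    qed
    then show ?thesis using finite_subset by blast
  qed
  have fin: "finite I"
  proof -
    have "finite (torus_orbit r u \<Sigma> \<sigma>)" if "\<sigma> \<in> M" for \<sigma>
      using single[of \<sigma>] that unfolding M_def by auto
    then show ?thesis unfolding eq using finM by blast
  qed
  show ?thesis unfolding I_def[symmetric] M_def[symmetric] using fin eq single by blast
qed

end
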